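(* Let $(\Omega,\mathcal F)$ be a measurable space, $\mathcal I\in\Sigma$, and $A_n\in\mathcal F$, $n\in\mathbb N$. (1) If $A_1\subset A_2\subset\cdots$, set $\mathcal I_{\mathcal A}=\{I\cap A_1\mid I\in\mathcal I\}\cup\{(I\cup A_n)\cap A_{n+1}\mid I\in\mathcal I,\ n\in\mathbb N\}\cup\{I\cup\bigcup_{n}A_n\mid I\in\mathcal I\}$. Then $A_n\in\mathcal I_{\mathcal A}$ for all $n$, $\bigcup_n A_n\in\mathcal I_{\mathcal A}$, and $\mathcal I_{\mathcal A}\in\Sigma$. (2) If $A_1\supset A_2\supset\cdots$, set $\mathcal I_{\mathcal A}=\{I\cap\bigcap_n A_n\mid I\in\mathcal I\}\cup\{(I\cup A_{n+1})\cap A_n\mid I\in\mathcal I,\ n\in\mathbb N\}\cup\{I\cup A_1\mid I\in\mathcal I\}$. Then $A_n\in\mathcal I_{\mathcal A}$ for all $n$, $\bigcap_n A_n\in\mathcal I_{\mathcal A}$, and $\mathcal I_{\mathcal A}\in\Sigma$.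
   Context: $\Sigma$ denotes the set of all classes $\mathcal I\subset\mathcal F$ that are chains (totally ordered by inclusion), contain $\emptyset$ and $\Omega$, and satisfy $\sigma[\mathcal I]=\mathcal F$. *)

theory Defs
  imports "HOL-Analysis.Analysis"
begin

text \<open>The class Sigma of a measurable space M: chains of measurable sets containing
  the empty set and the whole space and generating the sigma-algebra.\<close>
definition chain_generators :: "'a measure \<Rightarrow> 'a set set set" where
  "chain_generators M =
     {\<I>. \<I> \<subseteq> sets M \<and>
          (\<forall>I\<in>\<I>. \<forall>J\<in>\<I>. I \<subseteq> J \<or> J \<subseteq> I) \<and>
          {} \<in> \<I> \<and> space M \<in> \<I> \<and>
          sigma_sets (space M) \<I> = sets M}"

end

theory Submission
  imports Defs
begin

lemma inc_part:
  fixes M :: "'a measure" and \<I> :: "'a set set" and A :: "nat \<Rightarrow> 'a set"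
  assumes G: "\<I> \<in> chain_generators M"
    and A: "\<And>n. A n \<in> sets M" and inc: "incseq A"
    and IA_def: "IA = {I \<inter> A 0 | I. I \<in> \<I>}
                    \<union> {(I \<union> A n) \<inter> A (Suc n) | I n. I \<in> \<I>}
                    \<union> {I \<union> (\<Union>n. A n) | I. I \<in> \<I>}"
  shows "(\<forall>n. A n \<in> IA) \<and> (\<Union>n. A n) \<in> IA \<and> IA \<in> chain_generators M"
proof -
  have Isub: "\<I> \<subseteq> sets M" and ch: "\<And>I J. I \<in> \<I> \<Longrightarrow> J \<in> \<I> \<Longrightarrow> I \<subseteq> J \<or> J \<subseteq> I"
    and e: "{} \<in> \<I>" and sp: "space M \<in> \<I>" and gen: "sigma_sets (space M) \<I> = sets M"
    using G unfolding chain_generators_def by auto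
  have mono: "m \<le> n \<Longrightarrow> A m \<subseteq> A n" for m n using inc by (simp add: incseq_def)
  have Asp: "A n \<subseteq> space M" for n using A sets.sets_into_space by blast
  have monoS: "A n \<subseteq> A (Suc n)" for n using mono[of n "Suc n"] by simp
  have An: "A n \<in> IA" for n
  proof (cases n)
    case 0
    then show ?thesis unfolding IA_def using sp Asp by blast
  next
    case (Suc m)
    have "A n = (space M \<union> A m) \<inter> A (Suc m)" using Suc Asp by auto
    then show ?thesis unfolding IA_def using sp by blast
  qed
  have U: "(\<Union>n. A n) \<in> IA" unfolding IA_def using e by blast
  have sub: "IA \<subseteq> sets M" unfolding IA_def using Isub A by auto
  have chain: "X \<subseteq> Y \<or> Y \<subseteq> X" if X: "X \<in> IA" and Y: "Y \<in> IA" for X Y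
  proof -

    show ?thesis
      using X Y unfolding IA_def
    proof (elim UnE CollectE exE conjE)
      fix I J assume "X = I \<inter> A 0" "Y = J \<inter> A 0" "I \<in> \<I>" "J \<in> \<I>"
      then show ?thesis using ch by blast
    next
      fix I J n assume "X = I \<inter> A 0" "Y = (J \<union> A n) \<inter> A (Suc n)"
      then show ?thesis using mono[of 0 n] mono[of n "Suc n"] by auto
    next
      fix I J assume "X = I \<inter> A 0" "Y = J \<union> (\<Union>n. A n)"
      then show ?thesis by auto
    next
      fix I J n assume "Y = I \<inter> A 0" "X = (J \<union> A n) \<inter> A (Suc n)"
      then show ?thesis using mono[of 0 n] mono[of n "Suc n"] by auto
    next
      fix I J n m assume X: "X = (I \<union> A n) \<inter> A (Suc n)" and Y: "Y = (J \<union> A m) \<inter> A (Suc m)"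
        and IJ: "I \<in> \<I>" "J \<in> \<I>"
      show ?thesis
      proof (cases "n = m")
        case True then show ?thesis using X Y ch[OF IJ] by blast
      next
        case False
        then have "n < m \<or> m < n" by auto
        then show ?thesis
        proof
          assume "n < m"
          then have "A (Suc n) \<subseteq> A m" using mono by auto
          then show ?thesis using X Y monoS[of m] monoS[of n] by blast
        next
          assume "m < n"
          then have "A (Suc m) \<subseteq> A n" using mono by auto
          then show ?thesis using X Y monoS[of m] monoS[of n] by blast
        qed
      qed
    next
      fix I J n assume "X = (I \<union> A n) \<inter> A (Suc n)" "Y = J \<union> (\<Union>n. A n)"
      then show ?thesis by blast
    next
      fix I J assume "Y = I \<inter> A 0" "X = J \<union> (\<Union>n. A n)"
      then show ?thesis by auto
    next
      fix I J n assume "Y = (I \<union> A n) \<inter> A (Suc n)" "X = J \<union> (\<Union>n. A n)"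
      then show ?thesis by blast
    next
      fix I J assume "X = I \<union> (\<Union>n. A n)" "Y = J \<union> (\<Union>n. A n)" "I \<in> \<I>" "J \<in> \<I>"
      then show ?thesis using ch by blast
    qed
  qed
  have e2: "{} \<in> IA" unfolding IA_def using e by blast
  have sp2: "space M \<in> IA"
  proof -
    have "space M = space M \<union> (\<Union>n. A n)" using Asp by auto
    then show ?thesis unfolding IA_def using sp by blast
  qed
  have Pw: "IA \<subseteq> Pow (space M)" using sub sets.sets_into_space by blast
  interpret S: sigma_algebra "space M" "sigma_sets (space M) IA"
    by (rule sigma_algebra_sigma_sets[OF Pw])
  have inS: "X \<in> IA \<Longrightarrow> X \<in> sigma_sets (space M) IA" for X by auto
  have "J \<in> sigma_sets (space M) IA" if J: "J \<in> \<I>" for J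
  proof -
    have JA: "J \<inter> A n \<in> sigma_sets (space M) IA" for n
    proof (induction n)
      case 0
      have "J \<inter> A 0 \<in> IA" unfolding IA_def using J by blast
      then show ?case by (rule inS)
    next
      case (Suc n)
      have eq: "J \<inter> A (Suc n) = (J \<inter> A n) \<union> (((J \<union> A n) \<inter> A (Suc n)) - A n)"
        using mono[of n "Suc n"] by auto
      have "(J \<union> A n) \<inter> A (Suc n) \<in> IA"
        using J unfolding IA_def by blast
      then show ?case unfolding eq using Suc inS[OF An] inS
        by (intro S.Un S.Diff) auto
    qed
    have c1: "(\<Union>n. J \<inter> A n) \<in> sigma_sets (space M) IA"
      using JA by (intro S.countable_UN) auto
    have "J \<union> (\<Union>n. A n) \<in> IA"
      using J unfolding IA_def by blast
    then have c2: "J \<union> (\<Union>n. A n) \<in> sigma_sets (space M) IA" by (rule inS)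
    have eq: "J = (\<Union>n. J \<inter> A n) \<union> ((J \<union> (\<Union>n. A n)) - (\<Union>n. A n))" by blast
    show ?thesis by (subst eq) (intro S.Un S.Diff c1 c2 inS[OF U])
  qed
  then have "sets M \<subseteq> sigma_sets (space M) IA"
    using sigma_sets_mono[of \<I> "space M" IA] gen by auto
  moreover have "sigma_sets (space M) IA \<subseteq> sets M"
    using sigma_sets_mono[of IA "space M" \<I>] gen sub by auto
  ultimately have "sigma_sets (space M) IA = sets M" by blast
  then have "IA \<in> chain_generators M"
    unfolding chain_generators_def using sub chain e2 sp2 by blast
  then show ?thesis using An U by blast
qed

lemma dec_part:
  fixes M :: "'a measure" and \<I> :: "'a set set" and A :: "nat \<Rightarrow> 'a set"
  assumes G: "\<I> \<in> chain_generators M"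
    and A: "\<And>n. A n \<in> sets M" and dec: "decseq A"
    and IA_def: "IA = {I \<inter> (\<Inter>n. A n) | I. I \<in> \<I>}
                    \<union> {(I \<union> A (Suc n)) \<inter> A n | I n. I \<in> \<I>}
                    \<union> {I \<union> A 0 | I. I \<in> \<I>}"
  shows "(\<forall>n. A n \<in> IA) \<and> (\<Inter>n. A n) \<in> IA \<and> IA \<in> chain_generators M"
proof -
  have Isub: "\<I> \<subseteq> sets M" and ch: "\<And>I J. I \<in> \<I> \<Longrightarrow> J \<in> \<I> \<Longrightarrow> I \<subseteq> J \<or> J \<subseteq> I"
    and e: "{} \<in> \<I>" and sp: "space M \<in> \<I>" and gen: "sigma_sets (space M) \<I> = sets M"
    using G unfolding chain_generators_def by auto
  have mono: "m \<le> n \<Longrightarrow> A n \<subseteq> A m" for m n using dec by (simp add: decseq_def)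
  have Asp: "A n \<subseteq> space M" for n using A sets.sets_into_space by blast
  have monoS: "A (Suc n) \<subseteq> A n" for n using mono[of n "Suc n"] by simp
  have An: "A n \<in> IA" for n
  proof -
    have "A n = (space M \<union> A (Suc n)) \<inter> A n" using Asp by auto
    then show ?thesis unfolding IA_def using sp by blast
  qed
  have U: "(\<Inter>n. A n) \<in> IA"
  proof -
    have "(\<Inter>n. A n) = space M \<inter> (\<Inter>n. A n)" using Asp[of 0] by blast
    then show ?thesis unfolding IA_def using sp by blast
  qed
  have sub: "IA \<subseteq> sets M" unfolding IA_def using Isub A by auto
  have chain: "X \<subseteq> Y \<or> Y \<subseteq> X" if X: "X \<in> IA" and Y: "Y \<in> IA" for X Y
  proof -
    show ?thesis
      using X Y unfolding IA_def
    proof (elim UnE CollectE exE conjE)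
      fix I J assume "X = I \<inter> (\<Inter>n. A n)" "Y = J \<inter> (\<Inter>n. A n)" "I \<in> \<I>" "J \<in> \<I>"
      then show ?thesis using ch by blast
    next
      fix I J n assume "X = I \<inter> (\<Inter>n. A n)" "Y = (J \<union> A (Suc n)) \<inter> A n"
      moreover have "(\<Inter>n. A n) \<subseteq> A (Suc n)" by (rule INT_lower) simp
      ultimately show ?thesis by blast
    next
      fix I J assume "X = I \<inter> (\<Inter>n. A n)" "Y = J \<union> A 0"
      moreover have "(\<Inter>n. A n) \<subseteq> A 0" by (rule INT_lower) simp
      ultimately show ?thesis by blast
    next
      fix I J n assume "Y = I \<inter> (\<Inter>n. A n)" "X = (J \<union> A (Suc n)) \<inter> A n"
      moreover have "(\<Inter>n. A n) \<subseteq> A (Suc n)" by (rule INT_lower) simp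
      ultimately show ?thesis by blast
    next
      fix I J n m assume X: "X = (I \<union> A (Suc n)) \<inter> A n" and Y: "Y = (J \<union> A (Suc m)) \<inter> A m"
        and IJ: "I \<in> \<I>" "J \<in> \<I>"
      show ?thesis
      proof (cases "n = m")
        case True then show ?thesis using X Y ch[OF IJ] by blast
      next
        case False
        then have "n < m \<or> m < n" by auto
        then show ?thesis
        proof
          assume "n < m"
          then have "A m \<subseteq> A (Suc n)" using mono by auto
          then show ?thesis using X Y monoS[of m] monoS[of n] by blast
        next
          assume "m < n"
          then have "A n \<subseteq> A (Suc m)" using mono by auto
          then show ?thesis using X Y monoS[of m] monoS[of n] by blast
        qed
      qed
    next
      fix I J n assume "X = (I \<union> A (Suc n)) \<inter> A n" "Y = J \<union> A 0"
      then show ?thesis using mono[of 0 n] by blast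
    next
      fix I J assume "Y = I \<inter> (\<Inter>n. A n)" "X = J \<union> A 0"
      moreover have "(\<Inter>n. A n) \<subseteq> A 0" by (rule INT_lower) simp
      ultimately show ?thesis by blast
    next
      fix I J n assume "Y = (I \<union> A (Suc n)) \<inter> A n" "X = J \<union> A 0"
      then show ?thesis using mono[of 0 n] by blast
    next
      fix I J assume "X = I \<union> A 0" "Y = J \<union> A 0" "I \<in> \<I>" "J \<in> \<I>"
      then show ?thesis using ch by blast
    qed
  qed
  have e2: "{} \<in> IA" unfolding IA_def using e by blast
  have sp2: "space M \<in> IA"
  proof -
    have "space M = space M \<union> A 0" using Asp by auto
    then show ?thesis unfolding IA_def using sp by blast
  qed
  have Pw: "IA \<subseteq> Pow (space M)" using sub sets.sets_into_space by blast
  interpret S: sigma_algebra "space M" "sigma_sets (space M) IA"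
    by (rule sigma_algebra_sigma_sets[OF Pw])
  have inS: "X \<in> IA \<Longrightarrow> X \<in> sigma_sets (space M) IA" for X by auto
  have "J \<in> sigma_sets (space M) IA" if J: "J \<in> \<I>" for J
  proof -
    have JA: "J - A n \<in> sigma_sets (space M) IA" for n
    proof (induction n)
      case 0
      have "J \<union> A 0 \<in> IA" unfolding IA_def using J by blast
      then have "J \<union> A 0 \<in> sigma_sets (space M) IA" by (rule inS)
      moreover have "J - A 0 = (J \<union> A 0) - A 0" by blast
      ultimately show ?case using inS[OF An] by (metis S.Diff)
    next
      case (Suc n)
      have eq: "J - A (Suc n) = (J - A n) \<union> (((J \<union> A (Suc n)) \<inter> A n) - A (Suc n))"
        using monoS[of n] by auto
      have "(J \<union> A (Suc n)) \<inter> A n \<in> IA"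
        using J unfolding IA_def by blast
      then have "((J \<union> A (Suc n)) \<inter> A n) - A (Suc n) \<in> sigma_sets (space M) IA"
        using inS[OF An] inS by (intro S.Diff) auto
      then show ?case unfolding eq using Suc by (rule S.Un[rotated])
    qed
    have c1: "(\<Union>n. J - A n) \<in> sigma_sets (space M) IA"
      using JA by (intro S.countable_UN) auto
    have "J \<inter> (\<Inter>n. A n) \<in> IA"
      using J unfolding IA_def by blast
    then have c2: "J \<inter> (\<Inter>n. A n) \<in> sigma_sets (space M) IA" by (rule inS)
    have eq: "J = (\<Union>n. J - A n) \<union> (J \<inter> (\<Inter>n. A n))" by blast
    show ?thesis by (subst eq) (intro S.Un c1 c2)
  qed
  then have "sets M \<subseteq> sigma_sets (space M) IA"
    using sigma_sets_mono[of \<I> "space M" IA] gen by auto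
  moreover have "sigma_sets (space M) IA \<subseteq> sets M"
    using sigma_sets_mono[of IA "space M" \<I>] gen sub by auto
  ultimately have "sigma_sets (space M) IA = sets M" by blast
  then have "IA \<in> chain_generators M"
    unfolding chain_generators_def using sub chain e2 sp2 by blast
  then show ?thesis using An U by blast
qed

theorem lemma5:
  fixes M :: "'a measure" and \<I> :: "'a set set" and A :: "nat \<Rightarrow> 'a set"
  assumes "\<I> \<in> chain_generators M"
    and "\<And>n. A n \<in> sets M"
  shows "(incseq A \<longrightarrow>
           (let \<I>A = {I \<inter> A 0 | I. I \<in> \<I>}
                    \<union> {(I \<union> A n) \<inter> A (Suc n) | I n. I \<in> \<I>}
                    \<union> {I \<union> (\<Union>n. A n) | I. I \<in> \<I>}
            in (\<forall>n. A n \<in> \<I>A) \<and> (\<Union>n. A n) \<in> \<I>A \<and> \<I>A \<in> chain_generators M)) \<and>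
         (decseq A \<longrightarrow>
           (let \<I>A = {I \<inter> (\<Inter>n. A n) | I. I \<in> \<I>}
                    \<union> {(I \<union> A (Suc n)) \<inter> A n | I n. I \<in> \<I>}
                    \<union> {I \<union> A 0 | I. I \<in> \<I>}
            in (\<forall>n. A n \<in> \<I>A) \<and> (\<Inter>n. A n) \<in> \<I>A \<and> \<I>A \<in> chain_generators M))"
proof (intro conjI impI)
  assume "incseq A"
  then show "let \<I>A = {I \<inter> A 0 | I. I \<in> \<I>}
                    \<union> {(I \<union> A n) \<inter> A (Suc n) | I n. I \<in> \<I>}
                    \<union> {I \<union> (\<Union>n. A n) | I. I \<in> \<I>}
            in (\<forall>n. A n \<in> \<I>A) \<and> (\<Union>n. A n) \<in> \<I>A \<and> \<I>A \<in> chain_generators M"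
    unfolding Let_def by (rule inc_part[OF assms _ refl])
next
  assume "decseq A"
  then show "let \<I>A = {I \<inter> (\<Inter>n. A n) | I. I \<in> \<I>}
                    \<union> {(I \<union> A (Suc n)) \<inter> A n | I n. I \<in> \<I>}
                    \<union> {I \<union> A 0 | I. I \<in> \<I>}
            in (\<forall>n. A n \<in> \<I>A) \<and> (\<Inter>n. A n) \<in> \<I>A \<and> \<I>A \<in> chain_generators M"
    unfolding Let_def by (rule dec_part[OF assms _ refl])
qed

end
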